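(* The homomorphism $C_2^{\rm lb}(X)\to\mathbb Z_p$ defined on generators by \[ ((a,b),(a,c))\longmapsto (a-b)\,\frac{(a-b+2c)^p+(a+b)^p-2(a+c)^p}{p} \] (computed with integer lifts of $a,b,c$, the numerator in $\mathbb Z$ being divisible by $p$, then reduced mod $p$) vanishes on $D_2^{\rm lb}(X)+D_2^{\rm lb}(X,\rho)$, and the induced homomorphism $\theta_p:C_2^{\rm SLB}(X)\to\mathbb Z_p$ is a $2$-cocycle, i.e. $\theta_p\circ\partial_3^{\rm SLB}=0$.
   Context: Let $p$ be an odd prime, $X=\mathbb Z_p$, and $[a,b,c]=a-b+c$. Let $\rho((a,b))=(b,a)$, $(a,b)\,\underline{\star}\,(a,c)=(c,[a,b,c])$, $(a,b)\,\overline{\star}\,(a,c)=(c,[a,c,b])$. For $n\ge1$ let $C_n^{\rm lb}(X)$ be the free abelian group on tuples $((a,b_1),\dots,(a,b_n))$, $a,b_i\in X$ ($C_n^{\rm lb}=0$ for $n\le0$), with boundary for $n\ge2$ \[ \partial_n^{\rm lb}((a,b_1),\dots,(a,b_n))=\sum_{i=1}^n(-1)^i\Big\{((a,b_1),\dots,\widehat{(a,b_i)},\dots,(a,b_n))-\big((b_i,[a,b_1,b_i]),\dots,(b_i,[a,b_{i-1},b_i]),(b_i,[a,b_i,b_{i+1}]),\dots,(b_i,[a,b_i,b_n])\big)\Big\} \] and $\partial_n^{\rm lb}=0$ for $n\le1$. Let $D_n^{\rm lb}(X)$ be generated by tuples with $b_i=b_{i+1}$ for some $i$, and $D_n^{\rm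 lb}(X,\rho)$ generated by all $((a,b_1),\dots,(a,b_n))+((a,b_1)\underline\star(a,b_i),\dots,(a,b_{i-1})\underline\star(a,b_i),\rho((a,b_i)),(a,b_{i+1})\overline\star(a,b_i),\dots,(a,b_n)\overline\star(a,b_i))$. Both are subcomplexes, and $C_n^{\rm SLB}(X)=C_n^{\rm lb}(X)/(D_n^{\rm lb}(X)+D_n^{\rm lb}(X,\rho))$ with the induced boundary $\partial_n^{\rm SLB}$ is a chain complex. *)

theory Defs
  imports Main "HOL-Computational_Algebra.Primes"
begin

text \<open>X = Z_p is represented by the integers {0..<p}; all operations are reduced mod p.
A generator ((a,b_1),...,(a,b_n)) of C_n^lb(X) is represented by the pair (a, [b_1,...,b_n]).
Since X is finite, the free abelian group C_n^lb(X) is the group of all integer-valued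
functions on the (finite) set of generators; we represent chains as functions
(int \<times> int list) \<Rightarrow> int vanishing outside the generator set.\<close>

definition Xset :: "int \<Rightarrow> int set" where
  "Xset p = {0..<p}"

definition tern :: "int \<Rightarrow> int \<Rightarrow> int \<Rightarrow> int \<Rightarrow> int" where
  "tern p a b c = (a - b + c) mod p"

definition gens :: "int \<Rightarrow> nat \<Rightarrow> (int \<times> int list) set" where
  "gens p n = {(a, bs). a \<in> Xset p \<and> length bs = n \<and> set bs \<subseteq> Xset p}"

definition chains :: "int \<Rightarrow> nat \<Rightarrow> ((int \<times> int list) \<Rightarrow> int) set" where
  "chains p n = {c. \<forall>g. g \<notin> gens p n \<longrightarrow> c g = 0}"

definition single :: "(int \<times> int list) \<Rightarrow> ((int \<times> int list) \<Rightarrow> int)" where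
  "single g = (\<lambda>h. if h = g then 1 else 0)"

definition face2 :: "int \<Rightarrow> int \<Rightarrow> int list \<Rightarrow> nat \<Rightarrow> int \<times> int list" where
  "face2 p a bs i = (bs ! i,
      map (\<lambda>bj. tern p a bj (bs ! i)) (take i bs) @
      map (\<lambda>bj. tern p a (bs ! i) bj) (drop (Suc i) bs))"

text \<open>Boundary of a single generator (n \<ge> 2), as a chain; the index i in the paper
is i+1 here, so the sign (-1)^i becomes (-1)^(i+1).\<close>
definition bd_gen :: "int \<Rightarrow> (int \<times> int list) \<Rightarrow> ((int \<times> int list) \<Rightarrow> int)" where
  "bd_gen p g = (case g of (a, bs) \<Rightarrow>
     (if length bs \<le> 1 then (\<lambda>_. 0) else
      (\<lambda>h. \<Sum>i<length bs. (-1) ^ (i + 1) *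
          (single (a, take i bs @ drop (Suc i) bs) h - single (face2 p a bs i) h))))"

definition bd :: "int \<Rightarrow> nat \<Rightarrow> ((int \<times> int list) \<Rightarrow> int) \<Rightarrow> ((int \<times> int list) \<Rightarrow> int)" where
  "bd p n c = (\<lambda>h. \<Sum>g\<in>gens p n. c g * bd_gen p g h)"

definition Dgens_deg :: "int \<Rightarrow> nat \<Rightarrow> ((int \<times> int list) \<Rightarrow> int) set" where
  "Dgens_deg p n = {single (a, bs) | a bs. (a, bs) \<in> gens p n \<and>
       (\<exists>i. Suc i < n \<and> bs ! i = bs ! Suc i)}"

text \<open>Generators of D_n^lb(X,rho):
 ((a,b_1),...,(a,b_n)) + ((a,b_1) under-star (a,b_i),...,rho((a,b_i)),...,(a,b_n) over-star (a,b_i)),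
 where (a,b_j) under-star (a,b_i) = (b_i,[a,b_j,b_i]), rho(a,b_i) = (b_i,a),
 (a,b_j) over-star (a,b_i) = (b_i,[a,b_i,b_j]).\<close>
definition rho_tuple :: "int \<Rightarrow> int \<Rightarrow> int list \<Rightarrow> nat \<Rightarrow> int \<times> int list" where
  "rho_tuple p a bs i = (bs ! i,
      map (\<lambda>bj. tern p a bj (bs ! i)) (take i bs) @ [a] @
      map (\<lambda>bj. tern p a (bs ! i) bj) (drop (Suc i) bs))"

definition Dgens_rho :: "int \<Rightarrow> nat \<Rightarrow> ((int \<times> int list) \<Rightarrow> int) set" where
  "Dgens_rho p n = {(\<lambda>h. single (a, bs) h + single (rho_tuple p a bs i) h) | a bs i.
       (a, bs) \<in> gens p n \<and> i < n}"

inductive_set zspan :: "('a \<Rightarrow> int) set \<Rightarrow> ('a \<Rightarrow> int) set" for G where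
  zero: "(\<lambda>_. 0) \<in> zspan G"
| add: "x \<in> zspan G \<Longrightarrow> g \<in> G \<Longrightarrow> (\<lambda>h. x h + g h) \<in> zspan G"
| sub: "x \<in> zspan G \<Longrightarrow> g \<in> G \<Longrightarrow> (\<lambda>h. x h - g h) \<in> zspan G"

definition theta_num :: "int \<Rightarrow> int \<Rightarrow> int \<Rightarrow> int \<Rightarrow> int" where
  "theta_num p a b c = (a - b + 2 * c) ^ nat p + (a + b) ^ nat p - 2 * (a + c) ^ nat p"

definition theta_gen :: "int \<Rightarrow> int \<Rightarrow> int \<Rightarrow> int \<Rightarrow> int" where
  "theta_gen p a b c = ((a - b) * (theta_num p a b c div p)) mod p"

definition theta :: "int \<Rightarrow> ((int \<times> int list) \<Rightarrow> int) \<Rightarrow> int" where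
  "theta p c = (\<Sum>g\<in>gens p 2. c g * (case g of (a, bs) \<Rightarrow> theta_gen p a (bs ! 0) (bs ! 1))) mod p"

end

theory Submission imports Defs "HOL-Number_Theory.Number_Theory" begin

lemma fermat_int:
  fixes p x :: int
  assumes "prime p"
  shows "[x ^ nat p = x] (mod p)"
proof -
  have p0: "p > 0" using assms prime_gt_0_int by blast
  define k where "k = nat (x mod p)"
  have kx: "int k = x mod p" using p0 k_def by simp
  have pn: "prime (nat p)" using assms by simp
  have "[int k ^ nat p = int k] (mod p)"
  proof (cases "k = 0")
    case True
    then show ?thesis using p0 by (simp add: cong_def power_0_left)
  next
    case False
    have kl: "k < nat p" using p0 by (simp add: k_def)
    have "\<not> nat p dvd k" using False kl by (intro nat_dvd_not_less) simp_all
    from fermat_theorem[OF pn this] have "[k ^ (nat p - 1) = 1] (mod nat p)" .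
    then have "[k ^ (nat p - 1) * k = 1 * k] (mod nat p)" by (rule cong_scalar_right)
    moreover have "k ^ (nat p - 1) * k = k ^ nat p"
      using p0 by (intro power_minus_mult) simp
    ultimately have "[k ^ nat p = k] (mod nat p)" by simp
    then have "[int (k ^ nat p) = int k] (mod int (nat p))" by (simp only: cong_int_iff)
    then show ?thesis using p0 by simp
  qed
  moreover have "[x = int k] (mod p)" using kx by (simp add: cong_def)
  ultimately show ?thesis
    using cong_pow cong_sym cong_trans by metis
qed

lemma pow_cong_sq:
  fixes p x y :: int
  assumes "p > 0" "p dvd x - y"
  shows "p^2 dvd x ^ nat p - y ^ nat p"
proof -
  define n where "n = nat p"
  have S: "[(\<Sum>i<n. y^(n - Suc i) * x^i) = (\<Sum>i<n. x^(n - Suc i) * x^i)] (mod p)"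
    by (intro cong_sum cong_mult cong_pow) (use assms in \<open>auto simp: cong_iff_dvd_diff dvd_diff_commute\<close>)
  have "(\<Sum>i<n. x^(n - Suc i) * x^i) = (\<Sum>i<n. x^(n - 1))"
    by (intro sum.cong refl) (simp add: power_add[symmetric])
  also have "\<dots> = p * x^(n-1)" using assms n_def by simp
  finally have "p dvd (\<Sum>i<n. y^(n - Suc i) * x^i)" using S
    by (metis cong_dvd_iff dvd_triv_left)
  then have "p * p dvd (x - y) * (\<Sum>i<n. y^(n - Suc i) * x^i)"
    using assms(2) by (simp add: mult_dvd_mono)
  then show ?thesis by (simp add: power_diff_sumr2 n_def power2_eq_square)
qed

definition fval :: "int \<Rightarrow> int \<Rightarrow> int \<Rightarrow> int \<Rightarrow> int" where
  "fval p a b c = (a - b) * (theta_num p a b c div p)"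

lemma num_dvd:
  fixes p :: int assumes "prime p" shows "p dvd theta_num p a b c"
proof -
  have "[theta_num p a b c = (a-b+2*c) + (a+b) - 2*(a+c)] (mod p)"
    unfolding theta_num_def
    by (intro cong_add cong_diff cong_mult cong_refl fermat_int assms)
  then show ?thesis by (simp add: cong_0_iff)
qed

lemma num_lift:
  fixes p :: int assumes "prime p" "[a = a'] (mod p)" "[b = b'] (mod p)" "[c = c'] (mod p)"
  shows "p^2 dvd theta_num p a b c - theta_num p a' b' c'"
proof -
  have p0: "p > 0" using assms prime_gt_0_int by blast
  have d: "\<And>x y. [x = y] (mod p) \<Longrightarrow> p^2 dvd x ^ nat p - y ^ nat p"
    using pow_cong_sq[OF p0] by (simp add: cong_iff_dvd_diff)
  have 1: "p^2 dvd (a-b+2*c) ^ nat p - (a'-b'+2*c') ^ nat p"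
    by (intro d cong_add cong_diff cong_mult cong_refl assms)
  have 2: "p^2 dvd (a+b) ^ nat p - (a'+b') ^ nat p"
    by (intro d cong_add assms)
  have 3: "p^2 dvd (a+c) ^ nat p - (a'+c') ^ nat p"
    by (intro d cong_add assms)
  have "theta_num p a b c - theta_num p a' b' c' =
     ((a-b+2*c) ^ nat p - (a'-b'+2*c') ^ nat p) + ((a+b) ^ nat p - (a'+b') ^ nat p)
      - 2 * ((a+c) ^ nat p - (a'+c') ^ nat p)"
    unfolding theta_num_def by (simp add: algebra_simps)
  moreover have "p^2 dvd ((a-b+2*c) ^ nat p - (a'-b'+2*c') ^ nat p) + ((a+b) ^ nat p - (a'+b') ^ nat p)
      - 2 * ((a+c) ^ nat p - (a'+c') ^ nat p)"
    by (intro dvd_diff dvd_add dvd_mult 1 2 3)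
  ultimately show ?thesis by simp
qed

lemma fval_lift:
  fixes p :: int assumes "prime p" "[a = a'] (mod p)" "[b = b'] (mod p)" "[c = c'] (mod p)"
  shows "[fval p a b c = fval p a' b' c'] (mod p)"
proof -
  have p0: "p \<noteq> 0" using assms prime_gt_0_int by force
  obtain q where q: "theta_num p a b c = p * q" using num_dvd[OF assms(1)] by blast
  obtain q' where q': "theta_num p a' b' c' = p * q'" using num_dvd[OF assms(1)] by blast
  have "p * p dvd p * (q - q')" using num_lift[OF assms] q q'
    by (simp add: power2_eq_square right_diff_distrib)
  then have "p dvd q - q'" using p0 by simp
  then have qq: "[q = q'] (mod p)" by (simp add: cong_iff_dvd_diff)
  have "fval p a b c = (a - b) * q" using q p0 by (simp add: fval_def)
  moreover have "fval p a' b' c' = (a' - b') * q'" using q' p0 by (simp add: fval_def)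
  ultimately show ?thesis
    by (simp, intro cong_mult cong_diff qq assms)
qed

lemma tg_cong:
  fixes p :: int assumes "prime p" "[a = a'] (mod p)" "[b = b'] (mod p)" "[c = c'] (mod p)"
  shows "[theta_gen p a b c = fval p a' b' c'] (mod p)"
proof -
  have "[theta_gen p a b c = fval p a b c] (mod p)"
    by (simp add: theta_gen_def fval_def cong_def)
  then show ?thesis using fval_lift[OF assms] cong_trans by blast
qed

lemma fval_rho1: "fval p b a (a-b+c) = - fval p a b c"
proof -
  have "b - a + 2*(a-b+c) = a - b + 2*c" "b + (a-b+c) = a + c" "b + a = a + b" by simp_all
  then have "theta_num p b a (a-b+c) = theta_num p a b c" unfolding theta_num_def by (simp only:)
  then show ?thesis unfolding fval_def by (simp add: algebra_simps)
qed

lemma fval_rho2: "fval p c (a-b+c) a = - fval p a b c"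
proof -
  have "c - (a-b+c) + 2*a = a + b" "c + (a-b+c) = a - b + 2*c" "c + a = a + c" by simp_all
  then have "theta_num p c (a-b+c) a = theta_num p a b c" unfolding theta_num_def by (simp only:)
  then show ?thesis unfolding fval_def by (simp add: algebra_simps)
qed

lemma abstract_cocycle:
  fixes a b1 b2 b3 PA PB PC PD PE PF PG :: int
  shows "- ((a-b2)*(PA + PB - 2*PC) - (b1-(a-b1+b2))*(PA + PB - 2*PC))
     + ((a-b1)*(PD+PE-2*PC) - (b2-(a-b1+b2))*(PF + PG - 2*PC))
     - ((a-b1)*(PG + PE - 2*PB) - (b3-(a-b1+b3))*(PF + PD - 2*PA)) = 0"
  by (simp add: algebra_simps)

lemma num_cocycle:
  shows "- ((a-b2)*theta_num p a b2 b3 - (b1-(a-b1+b2))*theta_num p b1 (a-b1+b2) (a-b1+b3))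
     + ((a-b1)*theta_num p a b1 b3 - (b2-(a-b1+b2))*theta_num p b2 (a-b1+b2) (a-b2+b3))
     - ((a-b1)*theta_num p a b1 b2 - (b3-(a-b1+b3))*theta_num p b3 (a-b1+b3) (a-b2+b3)) = 0"
proof -
  have e: "b1 - (a-b1+b2) + 2*(a-b1+b3) = a - b2 + 2*b3"
     "b1 + (a-b1+b2) = a + b2" "b1 + (a-b1+b3) = a + b3"
     "b2 - (a-b1+b2) + 2*(a-b2+b3) = (a+b1) + (2*b3-2*b2)"
     "b2 + (a-b1+b2) = a - b1 + 2*b2" "b2 + (a-b2+b3) = a + b3"
     "b3 - (a-b1+b3) + 2*(a-b2+b3) = (a+b1) + (2*b3-2*b2)"
     "b3 + (a-b1+b3) = a - b1 + 2*b3" "b3 + (a-b2+b3) = a - b2 + 2*b3"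
    by simp_all
  show ?thesis
    unfolding theta_num_def e
    by (rule abstract_cocycle)
qed


lemma fin_gens: "finite (gens p n)"
proof -
  have "gens p n \<subseteq> Xset p \<times> {xs. set xs \<subseteq> Xset p \<and> length xs = n}" by (auto simp: gens_def)
  moreover have "finite (Xset p \<times> {xs. set xs \<subseteq> Xset p \<and> length xs = n})"
    by (intro finite_cartesian_product finite_lists_length_eq) (simp_all add: Xset_def)
  ultimately show ?thesis by (rule finite_subset)
qed

definition tgg :: "int \<Rightarrow> int \<times> int list \<Rightarrow> int" where
  "tgg p g = (case g of (a, bs) \<Rightarrow> theta_gen p a (bs ! 0) (bs ! 1))"

definition TT :: "int \<Rightarrow> ((int \<times> int list) \<Rightarrow> int) \<Rightarrow> int" where
  "TT p c = (\<Sum>g\<in>gens p 2. c g * tgg p g)"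

lemma theta_TT: "theta p c = TT p c mod p"
  by (simp add: theta_def TT_def tgg_def)

lemma TT_single: assumes "g0 \<in> gens p 2" shows "TT p (single g0) = tgg p g0"
proof -
  have e: "(\<lambda>g. single g0 g * tgg p g) = (\<lambda>g. if g = g0 then tgg p g else 0)"
    by (auto simp: single_def)
  show ?thesis unfolding TT_def e using assms by (simp add: fin_gens)
qed

lemma TT_add: "TT p (\<lambda>h. x h + y h) = TT p x + TT p y"
  by (simp add: TT_def sum.distrib algebra_simps)

lemma TT_sub: "TT p (\<lambda>h. x h - y h) = TT p x - TT p y"
  by (simp add: TT_def sum_subtractf algebra_simps)

lemma TT_neg: "TT p (\<lambda>h. - x h) = - TT p x"
  by (simp add: TT_def sum_negf)

lemma TT_zero: "TT p (\<lambda>_. 0) = 0"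
  by (simp add: TT_def)

lemma tern_X: "p > 0 \<Longrightarrow> tern p a b c \<in> Xset p"
  by (simp add: tern_def Xset_def)

lemma tern_cong: "[tern p a b c = a - b + c] (mod p)"
  by (simp add: tern_def cong_def)

lemma len2: "length bs = 2 \<Longrightarrow> \<exists>x y. bs = [x, y]"
  by (cases bs; cases "tl bs"; auto)

lemma len3: "length bs = 3 \<Longrightarrow> \<exists>x y z. bs = [x, y, z]"
  by (cases bs; cases "tl bs"; cases "tl (tl bs)"; auto)

lemma p_fval: assumes "prime p" shows "p * fval p a b c = (a - b) * theta_num p a b c"
proof -
  have "p * (theta_num p a b c div p) = theta_num p a b c"
    using num_dvd[OF assms] by simp
  then show ?thesis unfolding fval_def by (metis mult.left_commute)
qed

lemma fval_cocycle:
  assumes "prime p"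
  shows "- (fval p a b2 b3 - fval p b1 (a-b1+b2) (a-b1+b3))
     + (fval p a b1 b3 - fval p b2 (a-b1+b2) (a-b2+b3))
     - (fval p a b1 b2 - fval p b3 (a-b1+b3) (a-b2+b3)) = 0"
proof -
  have p0: "p \<noteq> 0" using assms by auto
  have "p * (- (fval p a b2 b3 - fval p b1 (a-b1+b2) (a-b1+b3))
     + (fval p a b1 b3 - fval p b2 (a-b1+b2) (a-b2+b3))
     - (fval p a b1 b2 - fval p b3 (a-b1+b3) (a-b2+b3))) = 
     - ((a-b2)*theta_num p a b2 b3 - (b1-(a-b1+b2))*theta_num p b1 (a-b1+b2) (a-b1+b3))
     + ((a-b1)*theta_num p a b1 b3 - (b2-(a-b1+b2))*theta_num p b2 (a-b1+b2) (a-b2+b3))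
     - ((a-b1)*theta_num p a b1 b2 - (b3-(a-b1+b3))*theta_num p b3 (a-b1+b3) (a-b2+b3))"
    by (simp only: p_fval[OF assms, symmetric] right_diff_distrib distrib_left mult_minus_right)
  also have "\<dots> = 0" by (rule num_cocycle)
  finally show ?thesis using p0 by simp
qed

lemma deg_ok:
  assumes "prime p" "g \<in> Dgens_deg p 2" shows "p dvd TT p g"
proof -
  obtain a bs i where g: "g = single (a, bs)" and m: "(a, bs) \<in> gens p 2"
     and i: "Suc i < 2" "bs ! i = bs ! Suc i"
    using assms(2) unfolding Dgens_deg_def by blast
  have "i = 0" using i by simp
  then have e: "bs ! Suc 0 = bs ! 0" using i by simp
  have "theta_num p a (bs!0) (bs!0) = 0"
  proof -
    have "a - bs!0 + 2 * bs!0 = a + bs!0" by simp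
    then show ?thesis unfolding theta_num_def by (simp only:)
  qed
  then have "tgg p (a, bs) = 0" by (simp add: tgg_def theta_gen_def e)
  then show ?thesis using TT_single[OF m] g by simp
qed

lemma rho_ok:
  assumes "prime p" "g \<in> Dgens_rho p 2" shows "p dvd TT p g"
proof -
  have p0: "p > 0" using assms prime_gt_0_int by blast
  obtain a bs i where g: "g = (\<lambda>h. single (a, bs) h + single (rho_tuple p a bs i) h)"
     and m: "(a, bs) \<in> gens p 2" and i: "i < 2"
    using assms(2) unfolding Dgens_rho_def by blast
  have "length bs = 2" using m by (simp add: gens_def)
  then obtain x y where bs: "bs = [x, y]" using len2 by blast
  have X: "a \<in> Xset p" "x \<in> Xset p" "y \<in> Xset p" using m bs by (auto simp: gens_def)
  have c0: "[theta_gen p a x y = fval p a x y] (mod p)"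
    by (intro tg_cong assms(1) cong_refl)
  show ?thesis
  proof (cases "i = 0")
    case True
    have r: "rho_tuple p a bs i = (x, [a, tern p a x y])"
      using True bs by (simp add: rho_tuple_def)
    have rm: "rho_tuple p a bs i \<in> gens p 2" using r X tern_X[OF p0] by (simp add: gens_def)
    have "TT p g = theta_gen p a x y + theta_gen p x a (tern p a x y)"
      using TT_single[OF m] TT_single[OF rm] r bs g by (simp add: TT_add tgg_def)
    moreover have "[theta_gen p x a (tern p a x y) = fval p x a (a - x + y)] (mod p)"
      by (intro tg_cong assms(1) cong_refl tern_cong)
    ultimately have "[TT p g = fval p a x y + fval p x a (a - x + y)] (mod p)"
      using c0 by (simp add: cong_add)
    then show ?thesis by (simp add: fval_rho1 cong_0_iff)
  next
    case False
    then have i1: "i = 1" using i by simp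
    have r: "rho_tuple p a bs i = (y, [tern p a x y, a])"
      using i1 bs by (simp add: rho_tuple_def)
    have rm: "rho_tuple p a bs i \<in> gens p 2" using r X tern_X[OF p0] by (simp add: gens_def)
    have "TT p g = theta_gen p a x y + theta_gen p y (tern p a x y) a"
      using TT_single[OF m] TT_single[OF rm] r bs g by (simp add: TT_add tgg_def)
    moreover have "[theta_gen p y (tern p a x y) a = fval p y (a - x + y) a] (mod p)"
      by (intro tg_cong assms(1) cong_refl tern_cong)
    ultimately have "[TT p g = fval p a x y + fval p y (a - x + y) a] (mod p)"
      using c0 by (simp add: cong_add)
    then show ?thesis by (simp add: fval_rho2 cong_0_iff)
  qed
qed

lemma zspan_ok:
  assumes "prime p" "c \<in> zspan (Dgens_deg p 2 \<union> Dgens_rho p 2)" shows "p dvd TT p c"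
  using assms(2)
proof (induction rule: zspan.induct)
  case zero
  then show ?case by (simp add: TT_zero)
next
  case (add x g)
  then have "p dvd TT p g" using deg_ok rho_ok assms(1) by blast
  then show ?case using add by (simp add: TT_add)
next
  case (sub x g)
  then have "p dvd TT p g" using deg_ok rho_ok assms(1) by blast
  then show ?case using sub by (simp add: TT_sub)
qed

lemma bd_ok:
  assumes "prime p" "g \<in> gens p 3" shows "p dvd TT p (bd_gen p g)"
proof -
  have p0: "p > 0" using assms prime_gt_0_int by blast
  obtain a bs where g: "g = (a, bs)" by (cases g)
  have "length bs = 3" using assms(2) g by (simp add: gens_def)
  then obtain x y z where bs: "bs = [x, y, z]" using len3 by blast
  have X: "a \<in> Xset p" "x \<in> Xset p" "y \<in> Xset p" "z \<in> Xset p"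
    using assms(2) g bs by (auto simp: gens_def)
  define d0 where "d0 = (a, [y, z])"
  define d1 where "d1 = (a, [x, z])"
  define d2 where "d2 = (a, [x, y])"
  define f0 where "f0 = (x, [tern p a x y, tern p a x z])"
  define f1 where "f1 = (y, [tern p a x y, tern p a y z])"
  define f2 where "f2 = (z, [tern p a x z, tern p a y z])"
  have mem: "d0 \<in> gens p 2" "d1 \<in> gens p 2" "d2 \<in> gens p 2"
     "f0 \<in> gens p 2" "f1 \<in> gens p 2" "f2 \<in> gens p 2"
    using X tern_X[OF p0] by (simp_all add: gens_def d0_def d1_def d2_def f0_def f1_def f2_def)
  have bdg: "bd_gen p g = (\<lambda>h. - (single d0 h - single f0 h) + (single d1 h - single f1 h)
        - (single d2 h - single f2 h))"
    by (rule ext) (simp add: g bs bd_gen_def face2_def numeral_3_eq_3 d0_def d1_def d2_def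
        f0_def f1_def f2_def)
  have "TT p (bd_gen p g) = - (tgg p d0 - tgg p f0) + (tgg p d1 - tgg p f1) - (tgg p d2 - tgg p f2)"
    unfolding bdg by (simp only: TT_add TT_sub TT_neg TT_single mem)
  also have "\<dots> = - (theta_gen p a y z - theta_gen p x (tern p a x y) (tern p a x z))
     + (theta_gen p a x z - theta_gen p y (tern p a x y) (tern p a y z))
     - (theta_gen p a x y - theta_gen p z (tern p a x z) (tern p a y z))"
    by (simp add: tgg_def d0_def d1_def d2_def f0_def f1_def f2_def)
  finally have E: "TT p (bd_gen p g) = - (theta_gen p a y z - theta_gen p x (tern p a x y) (tern p a x z))
     + (theta_gen p a x z - theta_gen p y (tern p a x y) (tern p a y z))
     - (theta_gen p a x y - theta_gen p z (tern p a x z) (tern p a y z))" .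
  have "[TT p (bd_gen p g) = - (fval p a y z - fval p x (a-x+y) (a-x+z))
     + (fval p a x z - fval p y (a-x+y) (a-y+z))
     - (fval p a x y - fval p z (a-x+z) (a-y+z))] (mod p)"
    unfolding E by (intro cong_add cong_diff cong_minus_minus_iff[THEN iffD2] tg_cong assms(1) cong_refl tern_cong)
  then show ?thesis using fval_cocycle[OF assms(1)] by (simp add: cong_0_iff)
qed

lemma bd_TT: "TT p (bd p 3 c) = (\<Sum>g\<in>gens p 3. c g * TT p (bd_gen p g))"
proof -
  have "TT p (bd p 3 c) = (\<Sum>h\<in>gens p 2. \<Sum>g\<in>gens p 3. c g * (bd_gen p g h * tgg p h))"
    by (simp add: TT_def bd_def sum_distrib_right mult.assoc)
  also have "\<dots> = (\<Sum>g\<in>gens p 3. \<Sum>h\<in>gens p 2. c g * (bd_gen p g h * tgg p h))"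
    by (rule sum.swap)
  also have "\<dots> = (\<Sum>g\<in>gens p 3. c g * TT p (bd_gen p g))"
    by (simp add: TT_def sum_distrib_left)
  finally show ?thesis .
qed

theorem lemma3p3:
  fixes p :: int
  assumes "prime p" and "odd p"
  shows "(\<forall>a b c. p dvd theta_num p a b c)
    \<and> (\<forall>c \<in> zspan (Dgens_deg p 2 \<union> Dgens_rho p 2). theta p c = 0)
    \<and> (\<forall>c \<in> chains p 3. theta p (bd p 3 c) = 0)"
proof (intro conjI allI ballI)
  fix a b c show "p dvd theta_num p a b c" by (rule num_dvd[OF assms(1)])
next
  fix c assume "c \<in> zspan (Dgens_deg p 2 \<union> Dgens_rho p 2)"
  then show "theta p c = 0" using zspan_ok[OF assms(1)] by (simp add: theta_TT)
next
  fix c assume "c \<in> chains p 3"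
  have "p dvd TT p (bd p 3 c)" unfolding bd_TT
    by (auto intro!: dvd_sum dvd_mult bd_ok assms(1))
  then show "theta p (bd p 3 c) = 0" by (simp add: theta_TT)
qed

end
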